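(* Let ${\mathbf{X}}\in\mathbb{R}_+^{m\times n}$, ${\mathbf{A}}_1\in\mathbb{R}^{k\times m}$, ${\mathbf{A}}_2\in\mathbb{R}^{n\times k}$ with ${\mathbf{A}}_1{\mathbf{X}}{\mathbf{A}}_2$ invertible. Let ${\mathbf{Q}}_1$ be a matrix whose columns form an orthonormal basis of the column space of ${\mathbf{X}}{\mathbf{A}}_2$, and ${\mathbf{Q}}_2$ a matrix whose columns form an orthonormal basis of the row space of ${\mathbf{A}}_1{\mathbf{X}}$. Let $\lambda_1,\lambda_2\ge0$ and let $\sigma_1,\sigma_2$ satisfy $$\sigma_1\ge\max_{a,b}\big(({\mathbf{A}}_1^T{\mathbf{A}}_1)_{ab}\big)_-,\quad \sigma_1\ge\max_{a,b}\big(({\mathbf{A}}_1^T{\mathbf{A}}_1+\lambda_1({\mathbf{I}}-{\mathbf{Q}}_1{\mathbf{Q}}_1^T))_{ab}\big)_-,$$ $$\sigma_2\ge\max_{a,b}\big(({\mathbf{A}}_2{\mathbf{A}}_2^T)_{ab}\big)_-,\quad \sigma_2\ge\max_{a,b}\big(({\mathbf{A}}_2{\mathbf{A}}_2^T+\lambda_2({\mathbf{I}}-{\mathbf{Q}}_2{\mathbf{Q}}_2^T))_{ab}\big)_-.$$ Set ${\mathbf{A}}_{1,\sigma}={\mathbf{A}}_1^T{\mathbf{A}}_1+\sigma_1\mathbf{1}_m\mathbf{1}_m^T$ and ${\mathbf{A}}_{2,\sigma}={\mathbf{A}}_2{\mathbf{A}}_2^T+\sigma_2\mathbf{1}_n\mathbf{1}_n^T$.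 Then, for entrywise nonnegative ${\mathbf{U}}\in\mathbb{R}^{m\times r}$, ${\mathbf{V}}\in\mathbb{R}^{n\times r}$ (with the denominators below entrywise positive), the objective $$\|{\mathbf{A}}_1({\mathbf{X}}-{\mathbf{U}}{\mathbf{V}}^T)\|_F^2+\|({\mathbf{X}}-{\mathbf{U}}{\mathbf{V}}^T){\mathbf{A}}_2\|_F^2+\lambda_1\|({\mathbf{I}}-{\mathbf{Q}}_1{\mathbf{Q}}_1^T){\mathbf{U}}{\mathbf{V}}^T\|_F^2+\lambda_2\|{\mathbf{U}}{\mathbf{V}}^T({\mathbf{I}}-{\mathbf{Q}}_2{\mathbf{Q}}_2^T)\|_F^2+\sigma_1\|\mathbf{1}_m^T({\mathbf{X}}-{\mathbf{U}}{\mathbf{V}}^T)\|_2^2+\sigma_2\|({\mathbf{X}}-{\mathbf{U}}{\mathbf{V}}^T)\mathbf{1}_n\|_2^2$$ does not increase under each of the updates $${\mathbf{U}}\leftarrow{\mathbf{U}}\circ\frac{{\mathbf{A}}_{1,\sigma}{\mathbf{X}}{\mathbf{V}}+{\mathbf{X}}{\mathbf{A}}_{2,\sigma}{\mathbf{V}}}{({\mathbf{A}}_{1,\sigma}+\lambda_1({\mathbf{I}}-{\mathbf{Q}}_1{\mathbf{Q}}_1^T)){\mathbf{U}}{\mathbf{V}}^T{\mathbf{V}}+{\mathbf{U}}{\mathbf{V}}^T({\mathbf{A}}_{2,\sigma}+\lambda_2({\mathbf{I}}-{\mathbf{Q}}_2{\mathbf{Q}}_2^T)){\mathbf{V}}},$$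 $${\mathbf{V}}\leftarrow{\mathbf{V}}\circ\frac{{\mathbf{X}}^T{\mathbf{A}}_{1,\sigma}{\mathbf{U}}+{\mathbf{A}}_{2,\sigma}{\mathbf{X}}^T{\mathbf{U}}}{{\mathbf{V}}{\mathbf{U}}^T({\mathbf{A}}_{1,\sigma}+\lambda_1({\mathbf{I}}-{\mathbf{Q}}_1{\mathbf{Q}}_1^T)){\mathbf{U}}+({\mathbf{A}}_{2,\sigma}+\lambda_2({\mathbf{I}}-{\mathbf{Q}}_2{\mathbf{Q}}_2^T)){\mathbf{V}}{\mathbf{U}}^T{\mathbf{U}}},$$ and the updated factors remain entrywise nonnegative.
   Context: $\mathbb{R}_+^{m\times n}$ denotes entrywise nonnegative $m\times n$ matrices; $(x)_-=-\min(x,0)$; $\mathbf{1}_m$ is the all-ones vector in $\mathbb{R}^m$; $\circ$ is entrywise product and the fraction bar is entrywise division. $\|\cdot\|_F$ is the Frobenius norm, $\|\cdot\|_2$ the Euclidean norm. *)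

theory Defs
  imports "HOL-Analysis.Analysis"
begin

text \<open>Matrices are rendered as \<open>real^'c^'r\<close> (rows indexed by 'r, columns by 'c).\<close>

definition negpart :: "real \<Rightarrow> real" where
  "negpart x = - min x 0"

definition max_negpart :: "real^'b^'a \<Rightarrow> real" where
  "max_negpart M = Max {negpart (M $ a $ b) | a b. True}"

definition frob_sq :: "real^'b^'a \<Rightarrow> real" where
  "frob_sq M = (\<Sum>i\<in>UNIV. \<Sum>j\<in>UNIV. (M $ i $ j)^2)"

definition nonneg_mat :: "real^'b^'a \<Rightarrow> bool" where
  "nonneg_mat M \<longleftrightarrow> (\<forall>i j. 0 \<le> M $ i $ j)"

definition pos_mat :: "real^'b^'a \<Rightarrow> bool" where
  "pos_mat M \<longleftrightarrow> (\<forall>i j. 0 < M $ i $ j)"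

definition hadamard :: "real^'b^'a \<Rightarrow> real^'b^'a \<Rightarrow> real^'b^'a" where
  "hadamard A B = (\<chi> i j. A $ i $ j * B $ i $ j)"

definition ediv :: "real^'b^'a \<Rightarrow> real^'b^'a \<Rightarrow> real^'b^'a" where
  "ediv A B = (\<chi> i j. A $ i $ j / B $ i $ j)"

definition ones_mat :: "real^'b^'a" where
  "ones_mat = (\<chi> i j. 1)"

definition ones_vec :: "real^'a" where
  "ones_vec = (\<chi> i. 1)"

definition orthonormal_basis_cols :: "real^'c^'a \<Rightarrow> (real^'a) set \<Rightarrow> bool" where
  "orthonormal_basis_cols Q S \<longleftrightarrow> transpose Q ** Q = mat 1 \<and> span (columns Q) = S"

definition nmf_obj ::
  "real^'n^'m \<Rightarrow> real^'m^'k \<Rightarrow> real^'k^'n \<Rightarrow> real^'c^'m \<Rightarrow> real^'d^'n \<Rightarrow>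
   real \<Rightarrow> real \<Rightarrow> real \<Rightarrow> real \<Rightarrow> real^'r^'m \<Rightarrow> real^'r^'n \<Rightarrow> real" where
  "nmf_obj X A1 A2 Q1 Q2 l1 l2 s1 s2 U V =
     (let R = X - U ** transpose V; W = U ** transpose V in
        frob_sq (A1 ** R) + frob_sq (R ** A2)
      + l1 * frob_sq ((mat 1 - Q1 ** transpose Q1) ** W)
      + l2 * frob_sq (W ** (mat 1 - Q2 ** transpose Q2))
      + s1 * (norm (transpose R *v ones_vec))^2
      + s2 * (norm (R *v ones_vec))^2)"

end

theory Submission
  imports Defs
begin
definition ip :: "real^'b^'a \<Rightarrow> real^'b^'a \<Rightarrow> real" where
  "ip A B = (\<Sum>i\<in>UNIV. \<Sum>j\<in>UNIV. A$i$j * B$i$j)"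

lemma ip_sym: "ip A B = ip B A" by (simp add: ip_def mult.commute)
lemma ip_transpose: "ip (transpose A) (transpose B) = ip A B"
  unfolding ip_def transpose_def by (simp, rule sum.swap)
lemma ip_add_left: "ip (A + B) C = ip A C + ip B C"
  by (simp add: ip_def algebra_simps sum.distrib)
lemma ip_diff_left: "ip (A - B) C = ip A C - ip B C"
  by (simp add: ip_def algebra_simps sum_subtractf)
lemma ip_scale_left: "ip (c *\<^sub>R A) C = c * ip A C"
  by (simp add: ip_def algebra_simps sum_distrib_left)
lemma ip_add_right: "ip C (A + B) = ip C A + ip C B"
  by (simp add: ip_def algebra_simps sum.distrib)
lemma ip_diff_right: "ip C (A - B) = ip C A - ip C B"
  by (simp add: ip_def algebra_simps sum_subtractf)
lemma ip_scale_right: "ip C (c *\<^sub>R A) = c * ip C A"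
  by (simp add: ip_def algebra_simps sum_distrib_left)

lemma ip_mult3: "ip A (B ** C) = ip (A ** transpose C) B"
  unfolding ip_def matrix_matrix_mult_def transpose_def
  apply (simp add: sum_distrib_left sum_distrib_right mult_ac)
  apply (rule sum.cong, simp)
  apply (rule sum.swap)
  done

lemma ip_mult2: "ip A (B ** C) = ip (transpose B ** A) C"
proof -
  have "ip A (B ** C) = ip (transpose A) (transpose C ** transpose B)"
    by (metis ip_transpose matrix_transpose_mul)
  also have "\<dots> = ip (transpose A ** transpose (transpose B)) (transpose C)"
    by (rule ip_mult3)
  also have "\<dots> = ip (transpose B ** A) C"
    by (metis ip_transpose matrix_transpose_mul transpose_transpose)
  finally show ?thesis .
qed

lemma frob_ip: "frob_sq M = ip M M" by (simp add: frob_sq_def ip_def power2_eq_square)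

lemma mm_add_r: "(A + B) ** (C::real^_^_) = A ** C + B ** C"
  by (simp add: matrix_matrix_mult_def vec_eq_iff algebra_simps sum.distrib)
lemma mm_diff_r: "(A - B) ** (C::real^_^_) = A ** C - B ** C"
  by (simp add: matrix_matrix_mult_def vec_eq_iff algebra_simps sum_subtractf)
lemma mm_diff_l: "(C::real^_^_) ** (A - B) = C ** A - C ** B"
  by (simp add: matrix_matrix_mult_def vec_eq_iff algebra_simps sum_subtractf)
lemma mm_scale_r: "(c *\<^sub>R A) ** (C::real^_^_) = c *\<^sub>R (A ** C)"
  by (simp add: scalar_matrix_assoc)
lemma tr_add: "transpose (A + B) = transpose A + (transpose B :: real^_^_)"
  by (simp add: transpose_def vec_eq_iff)
lemma tr_diff: "transpose (A - B) = transpose A - (transpose B :: real^_^_)"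
  by (simp add: transpose_def vec_eq_iff)
lemma tr_ones: "transpose (ones_mat :: real^'a^'a) = ones_mat"
  by (simp add: transpose_def ones_mat_def vec_eq_iff)

lemma norm1: "(norm (transpose R *v ones_vec))^2 = ip R (ones_mat ** (R::real^'b^'a))"
proof -
  have "(norm (transpose R *v ones_vec))^2 = (\<Sum>j\<in>UNIV. (\<Sum>i\<in>UNIV. R$i$j) * (\<Sum>k\<in>UNIV. R$k$j))"
    by (simp add: power2_norm_eq_inner inner_vec_def matrix_vector_mult_def transpose_def ones_vec_def)
  also have "\<dots> = (\<Sum>j\<in>UNIV. \<Sum>i\<in>UNIV. R$i$j * (\<Sum>k\<in>UNIV. R$k$j))"
    by (simp add: sum_distrib_right)
  also have "\<dots> = ip R (ones_mat ** R)"
    unfolding ip_def by (simp add: matrix_matrix_mult_def ones_mat_def, rule sum.swap)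
  finally show ?thesis .
qed
lemma norm2: "(norm (R *v ones_vec))^2 = ip R ((R::real^'b^'a) ** ones_mat)"
proof -
  have "(norm (R *v ones_vec))^2 = (\<Sum>i\<in>UNIV. (\<Sum>j\<in>UNIV. R$i$j) * (\<Sum>k\<in>UNIV. R$i$k))"
    by (simp add: power2_norm_eq_inner inner_vec_def matrix_vector_mult_def ones_vec_def)
  also have "\<dots> = (\<Sum>i\<in>UNIV. \<Sum>j\<in>UNIV. R$i$j * (\<Sum>k\<in>UNIV. R$i$k))"
    by (simp add: sum_distrib_right)
  also have "\<dots> = ip R (R ** ones_mat)"
    unfolding ip_def by (simp add: matrix_matrix_mult_def ones_mat_def)
  finally show ?thesis .
qed

lemma tr_E: "transpose (mat 1 - Q ** transpose Q) = (mat 1 - Q ** transpose (Q::real^'c^'a))"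
  by (simp add: tr_diff matrix_transpose_mul)

lemma idem_E: assumes "transpose Q ** Q = mat 1"
  shows "(mat 1 - Q ** transpose Q) ** (mat 1 - Q ** transpose (Q::real^'c^'a)) = mat 1 - Q ** transpose Q"
proof -
  have "Q ** transpose Q ** (Q ** transpose Q) = Q ** transpose Q"
    by (metis assms matrix_mul_assoc matrix_mul_rid)
  then show ?thesis by (simp add: mm_diff_l mm_diff_r)
qed

lemma expand_l: assumes "transpose S = S"
  shows "ip (S ** (X - W)) (X - W) = ip (S ** X) X - 2 * ip (S ** X) W + ip (S ** W) (W::real^'b^'a)"
proof -
  have "ip (S ** W) X = ip (S ** X) W"
    by (metis assms ip_mult2 ip_sym)
  then show ?thesis by (simp add: mm_diff_l ip_diff_left ip_diff_right)
qed

lemma expand_r: assumes "transpose T = T"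
  shows "ip ((X - W) ** T) (X - W) = ip (X ** T) X - 2 * ip (X ** T) W + ip (W ** T) (W::real^'b^'a)"
proof -
  have "ip (W ** T) X = ip (X ** T) W"
    by (metis assms ip_mult3 ip_sym)
  then show ?thesis by (simp add: mm_diff_r ip_diff_left ip_diff_right)
qed

lemma obj_U:
  fixes X :: "real^'n^'m" and A1 :: "real^'m^'k" and A2 :: "real^'k^'n"
    and Q1 :: "real^'c^'m" and Q2 :: "real^'d^'n"
    and U :: "real^'r^'m" and V :: "real^'r^'n"
    and l1 l2 s1 s2 :: real
  assumes Q1: "transpose Q1 ** Q1 = mat 1" and Q2: "transpose Q2 ** Q2 = mat 1"
  defines "A1s \<equiv> transpose A1 ** A1 + s1 *\<^sub>R ones_mat"
    and "A2s \<equiv> A2 ** transpose A2 + s2 *\<^sub>R ones_mat"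
    and "E1 \<equiv> mat 1 - Q1 ** transpose Q1"
    and "E2 \<equiv> mat 1 - Q2 ** transpose Q2"
  shows "nmf_obj X A1 A2 Q1 Q2 l1 l2 s1 s2 U V =
     ip (A1s ** X) X + ip (X ** A2s) X
     + ip ((A1s + l1 *\<^sub>R E1) ** U ** transpose V ** V + U ** transpose V ** (A2s + l2 *\<^sub>R E2) ** V) U
     - 2 * ip (A1s ** X ** V + X ** A2s ** V) U"
proof -
  define W where "W = U ** transpose V"
  define R where "R = X - W"
  have trE1: "transpose E1 = E1" and trE2: "transpose E2 = E2"
    unfolding E1_def E2_def by (rule tr_E)+
  have idE1: "E1 ** E1 = E1" and idE2: "E2 ** E2 = E2"
    unfolding E1_def E2_def using idem_E Q1 Q2 by blast+
  have trA1s: "transpose A1s = A1s" and trA2s: "transpose A2s = A2s"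
    unfolding A1s_def A2s_def by (simp_all add: tr_add transpose_scalar tr_ones matrix_transpose_mul)
  have f1: "frob_sq (A1 ** R) = ip ((transpose A1 ** A1) ** R) R"
    by (simp add: frob_ip ip_mult2 matrix_mul_assoc)
  have f2: "frob_sq (R ** A2) = ip (R ** (A2 ** transpose A2)) R"
    by (simp add: frob_ip ip_mult3 matrix_mul_assoc)
  have f3: "frob_sq (E1 ** W) = ip (E1 ** W) W"
    by (metis frob_ip ip_mult2 matrix_mul_assoc trE1 idE1)
  have f4: "frob_sq (W ** E2) = ip (W ** E2) W"
    by (metis frob_ip ip_mult3 matrix_mul_assoc trE2 idE2)
  have f5: "(norm (transpose R *v ones_vec))^2 = ip (ones_mat ** R) R"
    by (metis norm1 ip_sym)
  have f6: "(norm (R *v ones_vec))^2 = ip (R ** ones_mat) R"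
    by (simp add: norm2 ip_sym)
  have g1: "ip ((transpose A1 ** A1) ** R) R + s1 * ip (ones_mat ** R) R = ip (A1s ** R) R"
    unfolding A1s_def by (simp add: mm_add_r mm_scale_r ip_add_left ip_scale_left)
  have g2: "ip (R ** (A2 ** transpose A2)) R + s2 * ip (R ** ones_mat) R = ip (R ** A2s) R"
    unfolding A2s_def by (simp add: matrix_add_ldistrib matrix_scalar_ac mm_scale_r ip_add_left ip_scale_left)
  have e1: "ip (A1s ** R) R = ip (A1s ** X) X - 2 * ip (A1s ** X) W + ip (A1s ** W) W"
    unfolding R_def by (rule expand_l[OF trA1s])
  have e2: "ip (R ** A2s) R = ip (X ** A2s) X - 2 * ip (X ** A2s) W + ip (W ** A2s) W"
    unfolding R_def by (rule expand_r[OF trA2s])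
  have h1: "ip (A1s ** W) W + l1 * ip (E1 ** W) W = ip ((A1s + l1 *\<^sub>R E1) ** W) W"
    by (simp add: mm_add_r mm_scale_r ip_add_left ip_scale_left)
  have h2: "ip (W ** A2s) W + l2 * ip (W ** E2) W = ip (W ** (A2s + l2 *\<^sub>R E2)) W"
    by (simp add: matrix_add_ldistrib matrix_scalar_ac mm_scale_r ip_add_left ip_scale_left)
  have k1: "ip ((A1s + l1 *\<^sub>R E1) ** W) W = ip ((A1s + l1 *\<^sub>R E1) ** U ** transpose V ** V) U"
    unfolding W_def by (metis ip_sym ip_mult3 transpose_transpose matrix_mul_assoc)
  have k2: "ip (W ** (A2s + l2 *\<^sub>R E2)) W = ip (U ** transpose V ** (A2s + l2 *\<^sub>R E2) ** V) U"
    unfolding W_def by (metis ip_sym ip_mult3 transpose_transpose matrix_mul_assoc)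
  have k3: "ip (A1s ** X) W = ip (A1s ** X ** V) U"
    unfolding W_def by (metis ip_mult3 transpose_transpose)
  have k4: "ip (X ** A2s) W = ip (X ** A2s ** V) U"
    unfolding W_def by (metis ip_mult3 transpose_transpose)
  have "nmf_obj X A1 A2 Q1 Q2 l1 l2 s1 s2 U V = frob_sq (A1 ** R) + frob_sq (R ** A2)
      + l1 * frob_sq (E1 ** W) + l2 * frob_sq (W ** E2)
      + s1 * (norm (transpose R *v ones_vec))^2 + s2 * (norm (R *v ones_vec))^2"
    unfolding nmf_obj_def Let_def R_def W_def E1_def E2_def by simp
  then show ?thesis
    using f1 f2 f3 f4 f5 f6 g1 g2 e1 e2 h1 h2 k1 k2 k3 k4
    by (simp add: ip_add_left)
qed

lemma swap4: "(\<Sum>i\<in>UNIV. \<Sum>j\<in>UNIV. \<Sum>a\<in>UNIV. \<Sum>b\<in>UNIV. (f i j a b::real)) =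
              (\<Sum>a\<in>UNIV. \<Sum>b\<in>UNIV. \<Sum>i\<in>UNIV. \<Sum>j\<in>UNIV. f i j a b)"
proof -
  have "(\<Sum>i\<in>UNIV. \<Sum>j\<in>UNIV. \<Sum>a\<in>UNIV. \<Sum>b\<in>UNIV. f i j a b) =
        (\<Sum>i\<in>UNIV. \<Sum>a\<in>UNIV. \<Sum>j\<in>UNIV. \<Sum>b\<in>UNIV. f i j a b)"
    by (rule sum.cong, simp, rule sum.swap)
  also have "\<dots> = (\<Sum>a\<in>UNIV. \<Sum>i\<in>UNIV. \<Sum>j\<in>UNIV. \<Sum>b\<in>UNIV. f i j a b)"
    by (rule sum.swap)
  also have "\<dots> = (\<Sum>a\<in>UNIV. \<Sum>i\<in>UNIV. \<Sum>b\<in>UNIV. \<Sum>j\<in>UNIV. f i j a b)"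
    by (rule sum.cong, simp, rule sum.cong, simp, rule sum.swap)
  also have "\<dots> = (\<Sum>a\<in>UNIV. \<Sum>b\<in>UNIV. \<Sum>i\<in>UNIV. \<Sum>j\<in>UNIV. f i j a b)"
    by (rule sum.cong, simp, rule sum.swap)
  finally show ?thesis .
qed

lemma amgm2: "(K::real) \<ge> 0 \<Longrightarrow> 2 * (K * y * z) \<le> K * y^2 + K * z^2"
proof -
  assume "K \<ge> 0"
  moreover have "2 * (y * z) \<le> (y^2 + z^2)" using sum_squares_ge_zero[of "y - z" 0]
    by (simp add: power2_eq_square algebra_simps)
  ultimately have "K * (2 * (y*z)) \<le> K * (y^2 + z^2)" by (rule mult_left_mono[rotated])
  then show ?thesis by (simp add: algebra_simps)
qed

lemma LS4:
  fixes K :: "'a::finite \<Rightarrow> 'b::finite \<Rightarrow> 'a \<Rightarrow> 'b \<Rightarrow> real"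
  assumes sym: "\<And>i j a b. K i j a b = K a b i j" and nn: "\<And>i j a b. 0 \<le> K i j a b"
  shows "(\<Sum>i\<in>UNIV. \<Sum>j\<in>UNIV. \<Sum>a\<in>UNIV. \<Sum>b\<in>UNIV. K i j a b * y i j * y a b)
       \<le> (\<Sum>i\<in>UNIV. \<Sum>j\<in>UNIV. \<Sum>a\<in>UNIV. \<Sum>b\<in>UNIV. K i j a b * (y i j)^2)"
proof -
  let ?L = "(\<Sum>i\<in>UNIV. \<Sum>j\<in>UNIV. \<Sum>a\<in>UNIV. \<Sum>b\<in>UNIV. K i j a b * y i j * y a b)"
  let ?S1 = "(\<Sum>i\<in>UNIV. \<Sum>j\<in>UNIV. \<Sum>a\<in>UNIV. \<Sum>b\<in>UNIV. K i j a b * (y i j)^2)"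
  let ?S2 = "(\<Sum>i\<in>UNIV. \<Sum>j\<in>UNIV. \<Sum>a\<in>UNIV. \<Sum>b\<in>UNIV. K i j a b * (y a b)^2)"
  have "2 * ?L = (\<Sum>i\<in>UNIV. \<Sum>j\<in>UNIV. \<Sum>a\<in>UNIV. \<Sum>b\<in>UNIV. 2 * (K i j a b * y i j * y a b))"
    by (simp add: sum_distrib_left)
  also have "\<dots> \<le> (\<Sum>i\<in>UNIV. \<Sum>j\<in>UNIV. \<Sum>a\<in>UNIV. \<Sum>b\<in>UNIV. K i j a b * (y i j)^2 + K i j a b * (y a b)^2)"
    by (intro sum_mono amgm2 nn)
  also have "\<dots> = ?S1 + ?S2"
    by (simp add: sum.distrib)
  also have "?S2 = ?S1"
    by (subst swap4, simp add: sym)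
  finally show ?thesis by simp
qed

lemma LS2:
  fixes K :: "'b::finite \<Rightarrow> 'b \<Rightarrow> real"
  assumes sym: "\<And>a b. K a b = K b a" and nn: "\<And>a b. 0 \<le> K a b"
  shows "(\<Sum>j\<in>UNIV. \<Sum>b\<in>UNIV. K j b * y j * y b) \<le> (\<Sum>j\<in>UNIV. \<Sum>b\<in>UNIV. K j b * (y j)^2)"
proof -
  let ?L = "(\<Sum>j\<in>UNIV. \<Sum>b\<in>UNIV. K j b * y j * y b)"
  let ?S1 = "(\<Sum>j\<in>UNIV. \<Sum>b\<in>UNIV. K j b * (y j)^2)"
  let ?S2 = "(\<Sum>j\<in>UNIV. \<Sum>b\<in>UNIV. K j b * (y b)^2)"
  have "2 * ?L = (\<Sum>j\<in>UNIV. \<Sum>b\<in>UNIV. 2 * (K j b * y j * y b))"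
    by (simp add: sum_distrib_left)
  also have "\<dots> \<le> (\<Sum>j\<in>UNIV. \<Sum>b\<in>UNIV. K j b * (y j)^2 + K j b * (y b)^2)"
    by (intro sum_mono amgm2 nn)
  also have "\<dots> = ?S1 + ?S2"
    by (simp add: sum.distrib)
  also have "?S2 = ?S1"
    by (subst sum.swap, simp add: sym)
  finally show ?thesis by simp
qed

lemma term1:
  fixes P :: "real^'m^'m" and M :: "real^'r^'r" and U Y :: "real^'r^'m"
  assumes Ps: "\<And>a b. P$a$b = P$b$a" and Pn: "\<And>a b. 0 \<le> P$a$b"
    and Ms: "\<And>a b. M$a$b = M$b$a" and Mn: "\<And>a b. 0 \<le> M$a$b"
    and Un: "\<And>a b. 0 \<le> U$a$b"
  shows "ip (P ** hadamard U Y ** M) (hadamard U Y)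
      \<le> (\<Sum>i\<in>UNIV. \<Sum>j\<in>UNIV. U$i$j * (Y$i$j)^2 * (P ** U ** M)$i$j)"
proof -
  define K where "K i j a b = P$i$a * M$b$j * U$i$j * U$a$b" for i j a b
  have e1: "ip (P ** hadamard U Y ** M) (hadamard U Y) =
    (\<Sum>i\<in>UNIV. \<Sum>j\<in>UNIV. \<Sum>a\<in>UNIV. \<Sum>b\<in>UNIV. K i j a b * Y$i$j * Y$a$b)"
    unfolding ip_def matrix_matrix_mult_def hadamard_def K_def
    apply (simp add: sum_distrib_left sum_distrib_right)
    apply (rule sum.cong, simp)+
    apply (subst sum.swap)
    apply (simp add: mult_ac)
    done
  have e2: "(\<Sum>i\<in>UNIV. \<Sum>j\<in>UNIV. U$i$j * (Y$i$j)^2 * (P ** U ** M)$i$j) =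
    (\<Sum>i\<in>UNIV. \<Sum>j\<in>UNIV. \<Sum>a\<in>UNIV. \<Sum>b\<in>UNIV. K i j a b * (Y$i$j)^2)"
    unfolding matrix_matrix_mult_def K_def
    apply (simp add: sum_distrib_left sum_distrib_right)
    apply (rule sum.cong, simp)+
    apply (subst sum.swap)
    apply (simp add: mult_ac)
    done
  have "(\<Sum>i\<in>UNIV. \<Sum>j\<in>UNIV. \<Sum>a\<in>UNIV. \<Sum>b\<in>UNIV. K i j a b * Y$i$j * Y$a$b)
      \<le> (\<Sum>i\<in>UNIV. \<Sum>j\<in>UNIV. \<Sum>a\<in>UNIV. \<Sum>b\<in>UNIV. K i j a b * (Y$i$j)^2)"
    by (rule LS4[where y="\<lambda>i j. Y$i$j"]) (auto simp: K_def Ps Ms Pn Mn Un mult_ac)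
  then show ?thesis using e1 e2 by simp
qed

lemma term2:
  fixes N :: "real^'r^'r" and U Y :: "real^'r^'m"
  assumes Ns: "\<And>a b. N$a$b = N$b$a" and Nn: "\<And>a b. 0 \<le> N$a$b"
    and Un: "\<And>a b. 0 \<le> U$a$b"
  shows "ip (hadamard U Y ** N) (hadamard U Y)
      \<le> (\<Sum>i\<in>UNIV. \<Sum>j\<in>UNIV. U$i$j * (Y$i$j)^2 * (U ** N)$i$j)"
proof -
  define K where "K i j b = N$b$j * U$i$j * U$i$b" for i j b
  have e1: "ip (hadamard U Y ** N) (hadamard U Y) =
    (\<Sum>i\<in>UNIV. \<Sum>j\<in>UNIV. \<Sum>b\<in>UNIV. K i j b * Y$i$j * Y$i$b)"
    unfolding ip_def matrix_matrix_mult_def hadamard_def K_def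
    by (simp add: sum_distrib_left sum_distrib_right mult_ac)
  have e2: "(\<Sum>i\<in>UNIV. \<Sum>j\<in>UNIV. U$i$j * (Y$i$j)^2 * (U ** N)$i$j) =
    (\<Sum>i\<in>UNIV. \<Sum>j\<in>UNIV. \<Sum>b\<in>UNIV. K i j b * (Y$i$j)^2)"
    unfolding matrix_matrix_mult_def K_def
    by (simp add: sum_distrib_left sum_distrib_right mult_ac)
  have "(\<Sum>i\<in>UNIV. \<Sum>j\<in>UNIV. \<Sum>b\<in>UNIV. K i j b * Y$i$j * Y$i$b)
      \<le> (\<Sum>i\<in>UNIV. \<Sum>j\<in>UNIV. \<Sum>b\<in>UNIV. K i j b * (Y$i$j)^2)"
    by (rule sum_mono, rule LS2[where y="\<lambda>j. Y$_$j"]) (auto simp: K_def Ns Nn Un mult_ac)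
  then show ?thesis using e1 e2 by simp
qed

lemma negbound: "- max_negpart (G::real^'b^'a) \<le> G$a$b"
proof -
  have fin: "finite {negpart (G $ a $ b) | a b. True}"
  proof -
    have "{negpart (G $ a $ b) | a b. True} = (\<lambda>(a,b). negpart (G$a$b)) ` UNIV" by auto
    then show ?thesis by simp
  qed
  have "negpart (G$a$b) \<le> max_negpart G"
    unfolding max_negpart_def by (rule Max_ge[OF fin]) blast
  moreover have "- G$a$b \<le> negpart (G$a$b)" by (simp add: negpart_def)
  ultimately show ?thesis by linarith
qed

lemma nn_mult: "nonneg_mat A \<Longrightarrow> nonneg_mat B \<Longrightarrow> nonneg_mat ((A::real^'b^'a) ** (B::real^'c^'b))"
  unfolding nonneg_mat_def matrix_matrix_mult_def by (auto intro!: sum_nonneg)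
lemma nn_add: "nonneg_mat A \<Longrightarrow> nonneg_mat B \<Longrightarrow> nonneg_mat ((A::real^'b^'a) + B)"
  unfolding nonneg_mat_def by simp
lemma nn_tr: "nonneg_mat A \<Longrightarrow> nonneg_mat (transpose (A::real^'b^'a))"
  unfolding nonneg_mat_def transpose_def by simp
lemma symE: "transpose A = A \<Longrightarrow> (A::real^'a^'a)$a$b = A$b$a"
  by (metis transpose_def vec_lambda_beta)

lemma pt: assumes "(D::real) > 0" "u \<ge> 0"
  shows "u * (B/D)^2 * D - 2 * (B * (u * (B/D))) \<le> D * u - 2 * (B * u)"
proof -
  define y where "y = B/D"
  have B: "B = y * D" using assms(1) by (simp add: y_def)
  have "0 \<le> u*D*(1-y)^2" using assms by simp
  moreover have "u*D*(1-y)^2 = D*u - 2*(y*D*u) - (u*y^2*D - 2*(y*D*(u*y)))"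
    by (simp add: algebra_simps power2_eq_square)
  moreover have e: "B/D = y" by (simp add: y_def)
  ultimately show ?thesis unfolding e unfolding B by linarith
qed

lemma step_U:
  fixes X :: "real^'n^'m" and A1 :: "real^'m^'k" and A2 :: "real^'k^'n"
    and Q1 :: "real^'c^'m" and Q2 :: "real^'d^'n"
    and U :: "real^'r^'m" and V :: "real^'r^'n"
    and l1 l2 s1 s2 :: real
  assumes X_nn: "nonneg_mat X"
    and Q1: "transpose Q1 ** Q1 = mat 1" and Q2: "transpose Q2 ** Q2 = mat 1"
    and s1a: "s1 \<ge> max_negpart (transpose A1 ** A1)"
    and s1b: "s1 \<ge> max_negpart (transpose A1 ** A1 + l1 *\<^sub>R (mat 1 - Q1 ** transpose Q1))"
    and s2a: "s2 \<ge> max_negpart (A2 ** transpose A2)"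
    and s2b: "s2 \<ge> max_negpart (A2 ** transpose A2 + l2 *\<^sub>R (mat 1 - Q2 ** transpose Q2))"
    and U_nn: "nonneg_mat U" and V_nn: "nonneg_mat V"
  defines "A1s \<equiv> transpose A1 ** A1 + s1 *\<^sub>R ones_mat"
    and "A2s \<equiv> A2 ** transpose A2 + s2 *\<^sub>R ones_mat"
  defines "P1 \<equiv> A1s + l1 *\<^sub>R (mat 1 - Q1 ** transpose Q1)"
    and "P2 \<equiv> A2s + l2 *\<^sub>R (mat 1 - Q2 ** transpose Q2)"
  defines "DU \<equiv> P1 ** U ** transpose V ** V + U ** transpose V ** P2 ** V"
    and "B \<equiv> A1s ** X ** V + X ** A2s ** V"
  assumes pos: "pos_mat DU"
  shows "nmf_obj X A1 A2 Q1 Q2 l1 l2 s1 s2 (hadamard U (ediv B DU)) V \<le> nmf_obj X A1 A2 Q1 Q2 l1 l2 s1 s2 U V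
     \<and> nonneg_mat (hadamard U (ediv B DU))"
proof -
  define Y where "Y = ediv B DU"
  define U' where "U' = hadamard U Y"
  define M where "M = transpose V ** V"
  define N where "N = transpose V ** P2 ** V"
  have Dpos: "\<And>i j. DU$i$j > 0" using pos unfolding pos_mat_def by blast
  have Un: "\<And>i j. U$i$j \<ge> 0" using U_nn unfolding nonneg_mat_def by blast
  have A1s_nn: "nonneg_mat A1s"
  proof -
    { fix i j
      have "0 \<le> (transpose A1 ** A1)$i$j + s1" using negbound[of "transpose A1 ** A1" i j] s1a by linarith }
    then show ?thesis unfolding nonneg_mat_def A1s_def ones_mat_def by simp
  qed
  have A2s_nn: "nonneg_mat A2s"
  proof -
    { fix i j
      have "0 \<le> (A2 ** transpose A2)$i$j + s2" using negbound[of "A2 ** transpose A2" i j] s2a by linarith }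
    then show ?thesis unfolding nonneg_mat_def A2s_def ones_mat_def by simp
  qed
  have P1_nn: "\<And>a b. P1$a$b \<ge> 0"
  proof -
    fix a b
    have "P1$a$b = (transpose A1 ** A1 + l1 *\<^sub>R (mat 1 - Q1 ** transpose Q1))$a$b + s1"
      unfolding P1_def A1s_def ones_mat_def by simp
    then show "P1$a$b \<ge> 0" using negbound[of "transpose A1 ** A1 + l1 *\<^sub>R (mat 1 - Q1 ** transpose Q1)" a b] s1b
      by linarith
  qed
  have P2_nn: "nonneg_mat P2"
  proof -
    { fix a b
    have "P2$a$b = (A2 ** transpose A2 + l2 *\<^sub>R (mat 1 - Q2 ** transpose Q2))$a$b + s2"
      unfolding P2_def A2s_def ones_mat_def by simp
    then have "P2$a$b \<ge> 0" using negbound[of "A2 ** transpose A2 + l2 *\<^sub>R (mat 1 - Q2 ** transpose Q2)" a b] s2b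
      by linarith }
    then show ?thesis unfolding nonneg_mat_def by blast
  qed
  have trP1: "transpose P1 = P1" and trP2: "transpose P2 = P2"
    unfolding P1_def P2_def A1s_def A2s_def
    by (simp_all add: tr_add tr_diff transpose_scalar tr_ones matrix_transpose_mul)
  have trM: "transpose M = M" unfolding M_def by (simp add: matrix_transpose_mul)
  have trN: "transpose N = N" unfolding N_def by (simp add: matrix_transpose_mul trP2 matrix_mul_assoc)
  have M_nn: "nonneg_mat M" unfolding M_def by (intro nn_mult nn_tr V_nn)
  have N_nn: "nonneg_mat N" unfolding N_def by (intro nn_mult nn_tr V_nn P2_nn)
  have B_nn: "nonneg_mat B" unfolding B_def by (intro nn_add nn_mult A1s_nn A2s_nn X_nn V_nn)
  have D_eq: "\<And>Z. P1 ** Z ** transpose V ** V + Z ** transpose V ** P2 ** V = P1 ** Z ** M + Z ** N"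
    unfolding M_def N_def by (simp add: matrix_mul_assoc)
  have t: "ip (P1 ** U' ** M + U' ** N) U'
      \<le> (\<Sum>i\<in>UNIV. \<Sum>j\<in>UNIV. U$i$j * (Y$i$j)^2 * DU$i$j)"
  proof -
    have "ip (P1 ** U' ** M) U' \<le> (\<Sum>i\<in>UNIV. \<Sum>j\<in>UNIV. U$i$j * (Y$i$j)^2 * (P1 ** U ** M)$i$j)"
      unfolding U'_def
      by (rule term1) (use P1_nn symE[OF trP1] symE[OF trM] M_nn Un in \<open>auto simp: nonneg_mat_def\<close>)
    moreover have "ip (U' ** N) U' \<le> (\<Sum>i\<in>UNIV. \<Sum>j\<in>UNIV. U$i$j * (Y$i$j)^2 * (U ** N)$i$j)"
      unfolding U'_def
      by (rule term2) (use symE[OF trN] N_nn Un in \<open>auto simp: nonneg_mat_def\<close>)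
    moreover have "DU = P1 ** U ** M + U ** N" unfolding DU_def by (rule D_eq)
    ultimately show ?thesis
      by (simp add: ip_add_left algebra_simps sum.distrib)
  qed
  have ipBU': "ip B U' = (\<Sum>i\<in>UNIV. \<Sum>j\<in>UNIV. B$i$j * (U$i$j * (B$i$j / DU$i$j)))"
    unfolding ip_def U'_def Y_def hadamard_def ediv_def by simp
  have Yv: "\<And>i j. Y$i$j = B$i$j / DU$i$j" unfolding Y_def ediv_def by simp
  have key: "(\<Sum>i\<in>UNIV. \<Sum>j\<in>UNIV. U$i$j * (Y$i$j)^2 * DU$i$j) - 2 * ip B U'
      \<le> ip DU U - 2 * ip B U"
  proof -
    have "(\<Sum>i\<in>UNIV. \<Sum>j\<in>UNIV. U$i$j * (Y$i$j)^2 * DU$i$j) - 2 * ip B U'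
       = (\<Sum>i\<in>UNIV. \<Sum>j\<in>UNIV. U$i$j * (B$i$j / DU$i$j)^2 * DU$i$j - 2 * (B$i$j * (U$i$j * (B$i$j / DU$i$j))))"
      unfolding ipBU' Yv by (simp add: sum_subtractf sum_distrib_left)
    also have "\<dots> \<le> (\<Sum>i\<in>UNIV. \<Sum>j\<in>UNIV. DU$i$j * U$i$j - 2 * (B$i$j * U$i$j))"
      by (intro sum_mono pt Dpos Un)
    also have "\<dots> = ip DU U - 2 * ip B U"
      unfolding ip_def by (simp add: sum_subtractf sum_distrib_left)
    finally show ?thesis .
  qed
  have o1: "nmf_obj X A1 A2 Q1 Q2 l1 l2 s1 s2 U' V = ip (A1s ** X) X + ip (X ** A2s) X
     + ip (P1 ** U' ** M + U' ** N) U' - 2 * ip B U'"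
    using obj_U[OF Q1 Q2, of X A1 A2 l1 l2 s1 s2 U' V] D_eq
    unfolding A1s_def A2s_def P1_def P2_def B_def by simp
  have o2: "nmf_obj X A1 A2 Q1 Q2 l1 l2 s1 s2 U V = ip (A1s ** X) X + ip (X ** A2s) X
     + ip DU U - 2 * ip B U"
    using obj_U[OF Q1 Q2, of X A1 A2 l1 l2 s1 s2 U V]
    unfolding A1s_def A2s_def P1_def P2_def B_def DU_def by simp
  have nn: "nonneg_mat U'"
    unfolding nonneg_mat_def U'_def hadamard_def Y_def ediv_def
    using Un B_nn Dpos unfolding nonneg_mat_def by (auto intro!: mult_nonneg_nonneg divide_nonneg_pos)
  show ?thesis using o1 o2 t key nn unfolding U'_def Y_def by linarith
qed

lemma frob_tr: "frob_sq (transpose M) = frob_sq (M::real^'b^'a)"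
  unfolding frob_sq_def transpose_def by (simp, rule sum.swap)

lemma obj_swap:
  fixes X :: "real^'n^'m" and A1 :: "real^'m^'k" and A2 :: "real^'k^'n"
    and Q1 :: "real^'c^'m" and Q2 :: "real^'d^'n"
    and U :: "real^'r^'m" and V :: "real^'r^'n"
  shows "nmf_obj X A1 A2 Q1 Q2 l1 l2 s1 s2 U V =
         nmf_obj (transpose X) (transpose A2) (transpose A1) Q2 Q1 l2 l1 s2 s1 V U"
proof -
  define R where "R = X - U ** transpose V"
  define W where "W = U ** transpose V"
  have r: "transpose X - V ** transpose U = transpose R"
    unfolding R_def by (simp add: tr_diff matrix_transpose_mul)
  have w: "V ** transpose U = transpose W"
    unfolding W_def by (simp add: matrix_transpose_mul)
  have xw: "X - W = R" by (simp add: R_def W_def)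
  have a1: "frob_sq (transpose A2 ** transpose R) = frob_sq (R ** A2)"
    by (metis frob_tr matrix_transpose_mul)
  have a2: "frob_sq (transpose R ** transpose A1) = frob_sq (A1 ** R)"
    by (metis frob_tr matrix_transpose_mul)
  have a3: "frob_sq ((mat 1 - Q2 ** transpose Q2) ** transpose W) = frob_sq (W ** (mat 1 - Q2 ** transpose Q2))"
    by (metis frob_tr matrix_transpose_mul tr_E)
  have a4: "frob_sq (transpose W ** (mat 1 - Q1 ** transpose Q1)) = frob_sq ((mat 1 - Q1 ** transpose Q1) ** W)"
    by (metis frob_tr matrix_transpose_mul tr_E)
  show ?thesis
    unfolding nmf_obj_def Let_def
    unfolding r
    unfolding w
    unfolding R_def[symmetric] W_def[symmetric]
    unfolding xw transpose_transpose a1 a2 a3 a4 by linarith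
qed
theorem mainTheorem8:
  fixes X :: "real^'n^'m" and A1 :: "real^'m^'k" and A2 :: "real^'k^'n"
    and Q1 :: "real^'c^'m" and Q2 :: "real^'d^'n"
    and U :: "real^'r^'m" and V :: "real^'r^'n"
    and l1 l2 s1 s2 :: real
  assumes X_nn: "nonneg_mat X"
    and inv: "invertible (A1 ** X ** A2)"
    and Q1: "orthonormal_basis_cols Q1 (span (columns (X ** A2)))"
    and Q2: "orthonormal_basis_cols Q2 (span (rows (A1 ** X)))"
    and l1: "l1 \<ge> 0" and l2: "l2 \<ge> 0"
    and s1a: "s1 \<ge> max_negpart (transpose A1 ** A1)"
    and s1b: "s1 \<ge> max_negpart (transpose A1 ** A1 + l1 *\<^sub>R (mat 1 - Q1 ** transpose Q1))"
    and s2a: "s2 \<ge> max_negpart (A2 ** transpose A2)"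
    and s2b: "s2 \<ge> max_negpart (A2 ** transpose A2 + l2 *\<^sub>R (mat 1 - Q2 ** transpose Q2))"
    and U_nn: "nonneg_mat U" and V_nn: "nonneg_mat V"
  shows
   "(let A1s = transpose A1 ** A1 + s1 *\<^sub>R ones_mat;
         A2s = A2 ** transpose A2 + s2 *\<^sub>R ones_mat;
         P1 = A1s + l1 *\<^sub>R (mat 1 - Q1 ** transpose Q1);
         P2 = A2s + l2 *\<^sub>R (mat 1 - Q2 ** transpose Q2);
         DU = P1 ** U ** transpose V ** V + U ** transpose V ** P2 ** V;
         U' = hadamard U (ediv (A1s ** X ** V + X ** A2s ** V) DU);
         DV = V ** transpose U ** P1 ** U + P2 ** V ** transpose U ** U;
         V' = hadamard V (ediv (transpose X ** A1s ** U + A2s ** transpose X ** U) DV)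
     in (pos_mat DU \<longrightarrow>
           nmf_obj X A1 A2 Q1 Q2 l1 l2 s1 s2 U' V \<le> nmf_obj X A1 A2 Q1 Q2 l1 l2 s1 s2 U V
           \<and> nonneg_mat U')
      \<and> (pos_mat DV \<longrightarrow>
           nmf_obj X A1 A2 Q1 Q2 l1 l2 s1 s2 U V' \<le> nmf_obj X A1 A2 Q1 Q2 l1 l2 s1 s2 U V
           \<and> nonneg_mat V'))"
proof -
  have Q1o: "transpose Q1 ** Q1 = mat 1" using Q1 unfolding orthonormal_basis_cols_def by blast
  have Q2o: "transpose Q2 ** Q2 = mat 1" using Q2 unfolding orthonormal_basis_cols_def by blast
  define A1s where "A1s = transpose A1 ** A1 + s1 *\<^sub>R (ones_mat :: real^'m^'m)"
  define A2s where "A2s = A2 ** transpose A2 + s2 *\<^sub>R (ones_mat :: real^'n^'n)"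
  define P1 where "P1 = A1s + l1 *\<^sub>R (mat 1 - Q1 ** transpose Q1)"
  define P2 where "P2 = A2s + l2 *\<^sub>R (mat 1 - Q2 ** transpose Q2)"
  have partU: "pos_mat (P1 ** U ** transpose V ** V + U ** transpose V ** P2 ** V) \<longrightarrow>
    nmf_obj X A1 A2 Q1 Q2 l1 l2 s1 s2 (hadamard U (ediv (A1s ** X ** V + X ** A2s ** V) (P1 ** U ** transpose V ** V + U ** transpose V ** P2 ** V))) V
      \<le> nmf_obj X A1 A2 Q1 Q2 l1 l2 s1 s2 U V \<and>
    nonneg_mat (hadamard U (ediv (A1s ** X ** V + X ** A2s ** V) (P1 ** U ** transpose V ** V + U ** transpose V ** P2 ** V)))"
    using step_U[OF X_nn Q1o Q2o s1a s1b s2a s2b U_nn V_nn] unfolding P1_def P2_def A1s_def A2s_def by blast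
  have Xt: "nonneg_mat (transpose X)" by (rule nn_tr[OF X_nn])
  have s1a': "s2 \<ge> max_negpart (transpose (transpose A2) ** transpose A2)" using s2a by simp
  have s1b': "s2 \<ge> max_negpart (transpose (transpose A2) ** transpose A2 + l2 *\<^sub>R (mat 1 - Q2 ** transpose Q2))" using s2b by simp
  have s2a': "s1 \<ge> max_negpart (transpose A1 ** transpose (transpose A1))" using s1a by simp
  have s2b': "s1 \<ge> max_negpart (transpose A1 ** transpose (transpose A1) + l1 *\<^sub>R (mat 1 - Q1 ** transpose Q1))" using s1b by simp
  note stepV = step_U[of "transpose X" Q2 Q1 "transpose A2" s2 l2 "transpose A1" s1 l1 V U, OF Xt Q2o Q1o s1a' s1b' s2a' s2b' V_nn U_nn]
  have eB: "A2s ** transpose X ** U + transpose X ** A1s ** U = transpose X ** A1s ** U + A2s ** transpose X ** U"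
    by (simp add: add.commute)
  have eD: "P2 ** V ** transpose U ** U + V ** transpose U ** P1 ** U = V ** transpose U ** P1 ** U + P2 ** V ** transpose U ** U"
    by (simp add: add.commute)
  have partV: "pos_mat (V ** transpose U ** P1 ** U + P2 ** V ** transpose U ** U) \<longrightarrow>
    nmf_obj X A1 A2 Q1 Q2 l1 l2 s1 s2 U (hadamard V (ediv (transpose X ** A1s ** U + A2s ** transpose X ** U) (V ** transpose U ** P1 ** U + P2 ** V ** transpose U ** U)))
      \<le> nmf_obj X A1 A2 Q1 Q2 l1 l2 s1 s2 U V \<and>
    nonneg_mat (hadamard V (ediv (transpose X ** A1s ** U + A2s ** transpose X ** U) (V ** transpose U ** P1 ** U + P2 ** V ** transpose U ** U)))"
    using stepV unfolding obj_swap[of X A1 A2 Q1 Q2 l1 l2 s1 s2 U]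
    unfolding transpose_transpose A1s_def[symmetric] A2s_def[symmetric] P1_def[symmetric] P2_def[symmetric] eB eD
    by blast
  show ?thesis
    unfolding Let_def using partU partV unfolding P1_def P2_def A1s_def A2s_def by blast
qed
end
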